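(* Let $G$ be a connected graph with adjacency matrix $A$, $d=A\mathbf 1$, $D=\mathrm{diag}(d)$, $P=D^{-1}A$, let $e=(i,j)$, $i\ne j$, $a_{ij}>0$, be an edge that is not a cut-edge, $v=e_i-e_j$, $\widehat A=A+a_{ij}vv^T$, $\widehat P=D^{-1}\widehat A$ and $c(e)=K(\widehat P)-K(P)$. Define \[ W^{-1}=I-D^{-1/2}AD^{-1/2}+\frac{1}{\|d\|_1}D^{1/2}\mathbf 1\mathbf 1^TD^{1/2},\qquad \widehat W^{-1}=W^{-1}-a_{ij}D^{-1/2}vv^TD^{-1/2} \] (both matrices are invertible). Then \[ c(e)=a_{ij}\,v^TD^{-1/2}W\widehat WD^{-1/2}v, \] and moreover $1-a_{ij}v^TD^{-1/2}WD^{-1/2}v\ne 0$ and $\widehat W=W-\tau a_{ij}WD^{-1/2}vv^TD^{-1/2}W$ with $\tau=-1/(1-a_{ij}v^TD^{-1/2}WD^{-1/2}v)$.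
   Context: Graphs are undirected and possibly weighted on vertex set $\{1,\dots,n\}$, with symmetric nonnegative adjacency matrix $A=(a_{k\ell})$; $d=A\mathbf 1$ (all entries assumed positive); $\|d\|_1=\sum_k d_k$; $D^{\pm1/2}=\mathrm{diag}(d_k^{\pm1/2})$; $e_k$ is the $k$-th column of the identity and $\mathbf 1$ the all-ones vector. For an irreducible row-stochastic matrix $Q$ with stationary vector $\pi$, the Kemeny constant is $K(Q)=\sum_j\pi_j m_{kj}$, where $m_{kj}$ is the expected first passage time from $k$ to $j$ ($m_{kk}=0$), independent of $k$; equivalently $K(Q)=\sum_{\ell=2}^n 1/(1-\lambda_\ell)$, where $1=\lambda_1,\lambda_2,\dots,\lambda_n$ are the eigenvalues of $Q$. The edge $e$ is a cut-edge if the graph obtained by deleting $e$ is disconnected. *)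

theory Defs
  imports "HOL-Analysis.Analysis" "HOL-Computational_Algebra.Fundamental_Theorem_Algebra"
begin

definition unit_vec :: "'n::finite \<Rightarrow> real^'n" where
  "unit_vec k = (\<chi> l. if l = k then 1 else 0)"

definition ones :: "real^'n::finite" where
  "ones = (\<chi> l. 1)"

definition diag_mat :: "real^'n::finite \<Rightarrow> real^'n^'n" where
  "diag_mat x = (\<chi> k l. if k = l then x $ k else 0)"

definition outer :: "real^'n::finite \<Rightarrow> real^'n \<Rightarrow> real^'n^'n" where
  "outer x y = (\<chi> k l. x $ k * y $ l)"

definition degvec :: "real^'n^'n \<Rightarrow> real^'n::finite" where
  "degvec A = A *v ones"

definition edge_rel :: "real^'n^'n \<Rightarrow> ('n \<times> 'n) set" where
  "edge_rel A = {(k, l). A $ k $ l > 0}"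

definition graph_connected :: "real^'n::finite^'n \<Rightarrow> bool" where
  "graph_connected A \<longleftrightarrow> (\<forall>k l. (k, l) \<in> (edge_rel A)\<^sup>*)"

definition delete_edge :: "real^'n^'n \<Rightarrow> 'n \<Rightarrow> 'n \<Rightarrow> real^'n^'n" where
  "delete_edge A i j = (\<chi> k l. if (k = i \<and> l = j) \<or> (k = j \<and> l = i) then 0 else A $ k $ l)"

definition cut_edge :: "real^'n::finite^'n \<Rightarrow> 'n \<Rightarrow> 'n \<Rightarrow> bool" where
  "cut_edge A i j \<longleftrightarrow> \<not> graph_connected (delete_edge A i j)"

definition char_poly_c :: "real^'n::finite^'n \<Rightarrow> complex poly" where
  "char_poly_c Q = det (\<chi> k l. (if k = l then [:0, 1:] else 0) - [: complex_of_real (Q $ k $ l) :])"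

definition eigenvalues_c :: "real^'n::finite^'n \<Rightarrow> complex multiset" where
  "eigenvalues_c Q = proots (char_poly_c Q)"

text \<open>Kemeny constant K(Q) = sum over lambda_2..lambda_n of 1/(1 - lambda), where
  lambda_1 = 1 is removed once from the eigenvalue multiset.\<close>
definition kemeny :: "real^'n::finite^'n \<Rightarrow> complex" where
  "kemeny Q = (\<Sum>z\<in># (eigenvalues_c Q - {#1#}). 1 / (1 - z))"

end

theory Submission
  imports Defs
begin


lemma sym_dot:
  fixes S :: "real^'n::finite^'n"
  assumes "transpose S = S"
  shows "x \<bullet> (S *v y) = (S *v x) \<bullet> y"
  by (metis assms dot_lmul_matrix vector_transpose_matrix)

lemma sym_eigvec_exists:
  fixes S :: "real^'n::finite^'n"
  assumes sym: "transpose S = S" and V: "subspace V" and inv: "\<forall>y\<in>V. S *v y \<in> V"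
    and y0: "y0 \<in> V" "y0 \<noteq> 0"
  shows "\<exists>x\<in>V. norm x = 1 \<and> S *v x = (x \<bullet> (S *v x)) *\<^sub>R x"
proof -
  define K where "K = V \<inter> sphere 0 1"
  define f where "f = (\<lambda>y::real^'n. y \<bullet> (S *v y))"
  have "compact K" unfolding K_def
    using closed_subspace[OF V] compact_sphere
    by (metis compact_Int_closed inf_commute)
  moreover have "(1 / norm y0) *\<^sub>R y0 \<in> K"
    using y0 V by (simp add: K_def subspace_scale)
  hence "K \<noteq> {}" by blast
  moreover have "continuous_on K f"
  proof -
    have "bounded_linear (\<lambda>y::real^'n. S *v y)"
      using matrix_vector_mul_linear linear_conv_bounded_linear by blast
    hence "continuous_on K (\<lambda>y::real^'n. S *v y)" by (rule linear_continuous_on)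
    thus ?thesis unfolding f_def by (intro continuous_intros)
  qed
  ultimately obtain x where x: "x \<in> K" and xmax: "\<And>y. y \<in> K \<Longrightarrow> f y \<le> f x"
    using continuous_attains_sup by metis
  define M where "M = f x"
  have xV: "x \<in> V" and nx: "norm x = 1" using x by (auto simp: K_def)
  have xx: "x \<bullet> x = 1" using nx by (simp add: norm_eq_1)
  have key: "w \<bullet> (S *v w) \<le> M * (w \<bullet> w)" if w: "w \<in> V" for w
  proof (cases "w = 0")
    case True then show ?thesis by simp
  next
    case False
    let ?w = "(1 / norm w) *\<^sub>R w"
    have "?w \<in> K" using w False V by (simp add: K_def subspace_scale)
    hence "f ?w \<le> M" using xmax M_def by blast
    hence "(1 / norm w)^2 * (w \<bullet> (S *v w)) \<le> M"
      by (simp add: f_def matrix_vector_mult_scaleR power2_eq_square)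
    moreover have "w \<bullet> w = (norm w)^2" by (simp add: power2_norm_eq_inner)
    moreover have "norm w > 0" using False by simp
    ultimately show ?thesis
      by (simp add: field_simps power2_eq_square)
  qed
  have orth: "y \<bullet> (S *v x) = 0" if y: "y \<in> V" "y \<bullet> x = 0" for y
  proof -
    define c where "c = y \<bullet> (S *v x)"
    define L where "L = M * (y \<bullet> y) - y \<bullet> (S *v y)"
    have ineq: "2 * t * c \<le> t^2 * L" for t
    proof -
      have "x + t *\<^sub>R y \<in> V" using xV y V by (simp add: subspace_add subspace_scale)
      from key[OF this]
      have k1: "(x + t *\<^sub>R y) \<bullet> (S *v (x + t *\<^sub>R y)) \<le> M * ((x + t *\<^sub>R y) \<bullet> (x + t *\<^sub>R y))" .
      have e1: "(x + t *\<^sub>R y) \<bullet> (S *v (x + t *\<^sub>R y)) = M + 2 * t * c + t^2 * (y \<bullet> (S *v y))"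
      proof -
        have "x \<bullet> (S *v y) = c" using sym_dot[OF sym, of x y] by (simp add: c_def inner_commute)
        thus ?thesis
          by (simp add: M_def f_def c_def matrix_vector_right_distrib matrix_vector_mult_scaleR
              inner_add_left inner_add_right power2_eq_square algebra_simps)
      qed
      have e2: "(x + t *\<^sub>R y) \<bullet> (x + t *\<^sub>R y) = 1 + t^2 * (y \<bullet> y)"
        using xx y(2) by (simp add: inner_add_left inner_add_right inner_commute power2_eq_square)
      have "M + 2 * t * c + t^2 * (y \<bullet> (S *v y)) \<le> M * (1 + t^2 * (y \<bullet> y))"
        using k1 unfolding e1 e2 .
      thus ?thesis by (simp add: L_def algebra_simps)
    qed
    show ?thesis
    proof (rule ccontr)
      assume "\<not> ?thesis"
      hence c0: "c \<noteq> 0" by (simp add: c_def)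
      define p where "p = \<bar>L\<bar> + 1"
      define t where "t = c / p"
      have pos: "p > 0" by (simp add: p_def)
      have "2 * t * c * p^2 \<le> t^2 * L * p^2"
        by (rule mult_right_mono[OF ineq]) simp
      moreover have "2 * t * c * p^2 = 2 * c^2 * p"
        using pos by (simp add: t_def field_simps power2_eq_square)
      moreover have "t^2 * L * p^2 = c^2 * L"
        using pos by (simp add: t_def field_simps power2_eq_square)
      ultimately have i1: "2 * c^2 * p \<le> c^2 * L" by linarith
      have "c^2 > 0" using c0 by simp
      moreover have "c^2 * L \<le> c^2 * \<bar>L\<bar>" by (rule mult_left_mono) simp_all
      moreover have "c^2 * \<bar>L\<bar> \<ge> 0" by simp
      moreover have "2 * c^2 * p = 2 * (c^2 * \<bar>L\<bar>) + 2 * c^2" by (simp add: p_def algebra_simps)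
      ultimately show False using i1 by linarith
    qed
  qed
  define z where "z = S *v x - M *\<^sub>R x"
  have zV: "z \<in> V" using inv xV V by (simp add: z_def subspace_diff subspace_scale)
  have zx: "z \<bullet> x = 0"
    using xx by (simp add: z_def M_def f_def inner_diff_left inner_diff_right inner_commute)
  have "z \<bullet> (S *v x) = 0" using orth[OF zV zx] .
  hence "z \<bullet> z = 0" using zx by (simp add: z_def inner_diff_right)
  hence "z = 0" by simp
  hence "S *v x = (x \<bullet> (S *v x)) *\<^sub>R x" by (simp add: z_def M_def f_def)
  thus ?thesis using xV nx by blast
qed


lemma spectral_ext:
  fixes S :: "real^'n::finite^'n"
  assumes sym: "transpose S = S" and u: "norm u = 1" "S *v u = u"
  shows "\<exists>(q::'n \<Rightarrow> real^'n) lam k1. (\<forall>k l. q k \<bullet> q l = (if k = l then 1 else 0))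
            \<and> (\<forall>k. S *v q k = lam k *\<^sub>R q k) \<and> q k1 = u \<and> lam k1 = 1"
proof -
  define good where "good E \<longleftrightarrow> u \<in> E \<and> pairwise orthogonal E \<and> (\<forall>e\<in>E. norm e = 1)
      \<and> (\<forall>e\<in>E. S *v e = (e \<bullet> (S *v e)) *\<^sub>R e)" for E :: "(real^'n) set"
  have indep: "independent E \<and> finite E \<and> card E \<le> CARD('n)" if "good E" for E
  proof -
    have "0 \<notin> E" using that by (auto simp: good_def)
    hence ind: "independent E" using that pairwise_orthogonal_independent by (auto simp: good_def)
    thus ?thesis using independent_bound[OF ind] by (simp add: DIM_cart)
  qed
  have uu: "u \<bullet> u = 1" using u by (simp add: norm_eq_1)
  have g1: "good {u}" using u uu by (simp add: good_def pairwise_def)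
  obtain E where gE: "good E" and Emax: "\<And>F. good F \<Longrightarrow> card F \<le> card E"
  proof -
    have "\<forall>y. good y \<longrightarrow> card y < CARD('n) + 1" using indep by (simp add: less_Suc_eq_le)
    from ex_has_greatest_nat[OF g1 this] show ?thesis using that by blast
  qed
  have cardE: "card E = CARD('n)"
  proof (rule ccontr)
    assume "card E \<noteq> CARD('n)"
    hence lt: "card E < CARD('n)" using indep[OF gE] by simp
    have "dim E = card E" using indep[OF gE] by (simp add: dim_eq_card_independent)
    hence "dim E < DIM(real^'n)" using lt by (simp add: DIM_cart)
    then obtain y where y: "y \<noteq> 0" "\<And>w. w \<in> span E \<Longrightarrow> orthogonal y w"
      using orthogonal_to_subspace_exists by blast
    define V where "V = {w. \<forall>e\<in>E. orthogonal e w}"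
    have V: "subspace V" unfolding V_def by (rule subspace_orthogonal_to_vectors)
    have yV: "y \<in> V" using y(2) span_base by (auto simp: V_def orthogonal_commute)
    have invV: "\<forall>w\<in>V. S *v w \<in> V"
    proof
      fix w assume "w \<in> V"
      show "S *v w \<in> V" unfolding V_def
      proof (intro CollectI ballI)
        fix e assume e: "e \<in> E"
        have ew: "e \<bullet> w = 0" using \<open>w \<in> V\<close> e by (auto simp: V_def orthogonal_def)
        have "e \<bullet> (S *v w) = (S *v e) \<bullet> w" by (rule sym_dot[OF sym])
        also have "\<dots> = (e \<bullet> (S *v e)) * (e \<bullet> w)"
          using gE e unfolding good_def by (metis inner_scaleR_left)
        also have "\<dots> = 0" using ew by simp
        finally show "orthogonal e (S *v w)" by (simp add: orthogonal_def)
      qed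
    qed
    obtain x where xV: "x \<in> V" and nx: "norm x = 1" and ex: "S *v x = (x \<bullet> (S *v x)) *\<^sub>R x"
      using sym_eigvec_exists[OF sym V invV yV y(1)] by blast
    have xx: "x \<bullet> x = 1" using nx by (simp add: norm_eq_1)
    have xE: "x \<notin> E"
    proof
      assume "x \<in> E"
      hence "orthogonal x x" using xV by (auto simp: V_def)
      thus False using xx by (simp add: orthogonal_def)
    qed
    have "good (insert x E)"
      using gE xV nx ex unfolding good_def
      by (auto simp: pairwise_insert V_def orthogonal_commute)
    hence "card (insert x E) \<le> card E" by (rule Emax)
    moreover have "card (insert x E) = Suc (card E)" using indep[OF gE] xE by simp
    ultimately show False by simp
  qed
  obtain g where g: "bij_betw g (UNIV::'n set) E"
    using finite_same_card_bij[of "UNIV::'n set" E] indep[OF gE] cardE by auto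
  obtain k1 where k1: "g k1 = u" using g gE unfolding good_def
    by (metis bij_betw_imp_surj_on imageE)
  define lam where "lam k = g k \<bullet> (S *v g k)" for k
  have gin: "g k \<in> E" for k using g bij_betwE by blast
  have "\<forall>k l. g k \<bullet> g l = (if k = l then 1 else 0)"
  proof (intro allI)
    fix k l
    show "g k \<bullet> g l = (if k = l then 1 else 0)"
    proof (cases "k = l")
      case True
      then show ?thesis using gE gin by (simp add: good_def norm_eq_1)
    next
      case False
      hence "g k \<noteq> g l" using g by (metis bij_betw_imp_inj_on inj_on_def UNIV_I)
      hence "orthogonal (g k) (g l)" using gE gin unfolding good_def pairwise_def by blast
      then show ?thesis using False by (simp add: orthogonal_def)
    qed
  qed
  moreover have "\<forall>k. S *v g k = lam k *\<^sub>R g k" using gE gin by (simp add: good_def lam_def)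
  moreover have "lam k1 = 1" using k1 u uu by (simp add: lam_def)
  ultimately show ?thesis using k1 by (intro exI[of _ g] exI[of _ lam] exI[of _ k1]) simp
qed



lemma mm_sub_ldistrib: "(A::'a::comm_ring_1^'m^'n) ** (B - C) = A ** B - A ** C"
  by (simp add: vec_eq_iff matrix_matrix_mult_def sum_subtractf algebra_simps)
lemma mm_sub_rdistrib: "((B::'a::comm_ring_1^'m^'n) - C) ** A = B ** A - C ** A"
  by (simp add: vec_eq_iff matrix_matrix_mult_def sum_subtractf algebra_simps)
lemma mm_add_rdistrib: "((B::'a::comm_ring_1^'m^'n) + C) ** A = B ** A + C ** A"
  by (simp add: vec_eq_iff matrix_matrix_mult_def sum.distrib algebra_simps)

definition cp :: "real \<Rightarrow> complex poly" where "cp r = [:complex_of_real r:]"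
definition liftm :: "real^'n^'m \<Rightarrow> complex poly^'n^'m" where "liftm M = (\<chi> k l. cp (M$k$l))"
definition Xm :: "complex poly^'n^'n" where "Xm = (\<chi> k l. if k = l then [:0,1:] else 0)"

lemma cp_0[simp]: "cp 0 = 0" and cp_1[simp]: "cp 1 = 1"
  by (simp_all add: cp_def one_pCons)
lemma cp_add: "cp (a + b) = cp a + cp b" by (simp add: cp_def)
lemma cp_mult: "cp (a * b) = cp a * cp b" by (simp add: cp_def mult_to_poly)
lemma cp_sum: "cp (sum f A) = (\<Sum>x\<in>A. cp (f x))"
  by (induction A rule: infinite_finite_induct) (simp_all add: cp_add)

lemma liftm_mult: "liftm ((A::real^'m^'n) ** (B::real^'k^'m)) = liftm A ** liftm B"
  by (simp add: vec_eq_iff liftm_def matrix_matrix_mult_def cp_sum cp_mult)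
lemma liftm_mat1: "liftm (mat 1 :: real^'n^'n) = mat 1"
  by (simp add: vec_eq_iff liftm_def mat_def)

lemma char_poly_c_alt: "char_poly_c M = det (Xm - liftm M)"
proof -
  have "(\<chi> k l. (if k = l then [:0, 1:] else 0) - [: complex_of_real (M $ k $ l) :]) = Xm - liftm M"
    by (simp add: vec_eq_iff Xm_def liftm_def cp_def)
  thus ?thesis by (simp add: char_poly_c_def)
qed

lemma Xm_right: "((A::complex poly^'n^'m) ** Xm) $ k $ l = A $ k $ l * [:0,1:]"
  by (simp add: matrix_matrix_mult_def Xm_def if_distrib cong: if_cong)
lemma Xm_left: "(Xm ** (A::complex poly^'n^'n)) $ k $ l = [:0,1:] * A $ k $ l"
proof -
  have "(Xm ** A) $ k $ l = (\<Sum>m\<in>UNIV. if k = m then [:0,1:] * A$m$l else 0)"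
    unfolding matrix_matrix_mult_def Xm_def vec_lambda_beta by (rule sum.cong) auto
  thus ?thesis by simp
qed

lemma Xm_comm: "(A::complex poly^'n^'n) ** Xm = Xm ** A"
  by (simp add: vec_eq_iff Xm_right Xm_left mult.commute)

lemma char_poly_sim:
  fixes U V L :: "real^'n::finite^'n"
  assumes UV: "U ** V = mat 1"
  shows "char_poly_c (U ** L ** V) = char_poly_c L"
proof -
  have "liftm U ** (Xm - liftm L) ** liftm V = liftm U ** Xm ** liftm V - liftm U ** liftm L ** liftm V"
    by (simp add: mm_sub_ldistrib mm_sub_rdistrib)
  also have "liftm U ** Xm ** liftm V = Xm"
    by (simp add: Xm_comm matrix_mul_assoc[symmetric] liftm_mult[symmetric] UV liftm_mat1)
  also have "liftm U ** liftm L ** liftm V = liftm (U ** L ** V)"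
    by (simp add: liftm_mult)
  finally have e: "Xm - liftm (U ** L ** V) = liftm U ** (Xm - liftm L) ** liftm V" ..
  have d1: "det (liftm U) * det (liftm V) = 1"
    by (metis UV det_I det_mul liftm_mat1 liftm_mult)
  show ?thesis unfolding char_poly_c_alt e det_mul
    using d1 by (metis mult.commute mult.left_commute mult.right_neutral)
qed

lemma char_poly_diag:
  "char_poly_c (diag_mat (lamv::real^'n::finite)) = (\<Prod>k\<in>UNIV. [:- complex_of_real (lamv$k), 1:])"
proof -
  have "det (Xm - liftm (diag_mat lamv)) = (\<Prod>k\<in>UNIV. (Xm - liftm (diag_mat lamv)) $ k $ k)"
    by (rule det_diagonal) (simp add: Xm_def liftm_def diag_mat_def)
  also have "\<dots> = (\<Prod>k\<in>UNIV. [:- complex_of_real (lamv$k), 1:])"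
    by (simp add: Xm_def liftm_def diag_mat_def cp_def)
  finally show ?thesis by (simp add: char_poly_c_alt)
qed

lemma sum_single_mset: "finite A \<Longrightarrow> (\<Sum>x\<in>A. {#f x#}) = image_mset f (mset_set A)"
  by (induction A rule: finite_induct) simp_all

lemma kemeny_diag:
  fixes U V :: "real^'n::finite^'n"
  assumes UV: "U ** V = mat 1" and k1: "lamv $ k1 = 1"
  shows "kemeny (U ** diag_mat lamv ** V) = complex_of_real (\<Sum>k\<in>UNIV - {k1}. 1 / (1 - lamv$k))"
proof -
  define c where "c k = complex_of_real (lamv $ k)" for k
  have "eigenvalues_c (U ** diag_mat lamv ** V) = (\<Sum>k\<in>UNIV. {#c k#})"
    unfolding eigenvalues_c_def char_poly_sim[OF UV] char_poly_diag
    by (subst proots_prod) (simp_all add: c_def)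
  also have "\<dots> = image_mset c (mset_set UNIV)" by (simp add: sum_single_mset)
  also have "\<dots> = add_mset 1 (image_mset c (mset_set (UNIV - {k1})))"
    by (subst mset_set.remove[of UNIV k1]) (simp_all add: c_def k1)
  finally have ev: "eigenvalues_c (U ** diag_mat lamv ** V) - {#1#} = image_mset c (mset_set (UNIV - {k1}))"
    by simp
  have "kemeny (U ** diag_mat lamv ** V) = (\<Sum>k\<in>UNIV - {k1}. 1 / (1 - c k))"
    unfolding kemeny_def ev by (simp add: sum_unfold_sum_mset multiset.map_comp o_def)
  also have "\<dots> = complex_of_real (\<Sum>k\<in>UNIV - {k1}. 1 / (1 - lamv$k))"
    by (simp add: c_def)
  finally show ?thesis .
qed



lemma sum_delta_l: "(\<Sum>m\<in>(UNIV::'n::finite set). (if k = m then a m else 0) * (b m::real)) = a k * b k"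
proof -
  have "(\<Sum>m\<in>(UNIV::'n set). (if k = m then a m else 0) * b m) = (\<Sum>m\<in>UNIV. if k = m then a m * b m else 0)"
    by (rule sum.cong) auto
  thus ?thesis by simp
qed
lemma sum_delta_r: "(\<Sum>m\<in>(UNIV::'n::finite set). (b m::real) * (if m = l then a m else 0)) = b l * a l"
proof -
  have "(\<Sum>m\<in>(UNIV::'n set). b m * (if m = l then a m else 0)) = (\<Sum>m\<in>UNIV. if l = m then b m * a m else 0)"
    by (rule sum.cong) auto
  thus ?thesis by simp
qed

lemma diag_left: "(diag_mat x ** (M::real^'m^'n::finite)) $ k $ l = x$k * M$k$l"
  unfolding matrix_matrix_mult_def diag_mat_def vec_lambda_beta by (rule sum_delta_l)
lemma diag_right: "((M::real^'n::finite^'m) ** diag_mat x) $ k $ l = M$k$l * x$l"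
  unfolding matrix_matrix_mult_def diag_mat_def vec_lambda_beta by (rule sum_delta_r)
lemma diag_vec: "(diag_mat x *v (w::real^'n::finite)) $ k = x$k * w$k"
  unfolding matrix_vector_mult_def diag_mat_def vec_lambda_beta by (rule sum_delta_l)
lemma diag_transpose: "transpose (diag_mat x) = diag_mat (x::real^'n::finite)"
  by (simp add: vec_eq_iff transpose_def diag_mat_def)
lemma outer_vec: "outer x y *v (w::real^'n::finite) = (y \<bullet> w) *\<^sub>R x"
  by (simp add: vec_eq_iff outer_def matrix_vector_mult_def inner_vec_def sum_distrib_left algebra_simps)
lemma outer_nth: "outer x y $ k $ l = x$k * y$l" by (simp add: outer_def)
lemma mat1_nth: "(mat 1 :: real^'n^'n) $ k $ l = (if k = l then 1 else 0)" by (simp add: mat_def)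
lemma trace_scaleR: "trace (c *\<^sub>R (M::real^'n::finite^'n)) = c * trace M"
  by (simp add: trace_def sum_distrib_left)

lemma matrix_inv_unique:
  fixes A B :: "real^'n::finite^'n"
  assumes "A ** B = mat 1"
  shows "matrix_inv A = B"
proof -
  have BA: "B ** A = mat 1" using assms matrix_left_right_inverse by blast
  have ex: "\<exists>A'. A ** A' = mat 1 \<and> A' ** A = mat 1" using assms BA by blast
  define C where "C = matrix_inv A"
  have C: "A ** C = mat 1 \<and> C ** A = mat 1"
    unfolding C_def matrix_inv_def using someI_ex[OF ex] .
  have "C = C ** (A ** B)" using assms by simp
  also have "\<dots> = B" using C by (simp add: matrix_mul_assoc)
  finally show ?thesis by (simp add: C_def)
qed

lemma harmonic_const:
  fixes B :: "real^'n::finite^'n"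
  assumes nonneg: "\<And>k l. B$k$l \<ge> 0" and conn: "graph_connected B"
    and h: "\<And>k. (\<Sum>l\<in>UNIV. B$k$l * y$l) = (\<Sum>l\<in>UNIV. B$k$l) * y$k"
  shows "y$k = y$l"
proof -
  define m where "m = Max (range (\<lambda>k. y$k))"
  have "m \<in> range (\<lambda>k. y$k)" unfolding m_def by (rule Max_in) simp_all
  then obtain k0 where k0: "y$k0 = m" by blast
  have le: "y$k \<le> m" for k unfolding m_def by (simp add: Max_ge)
  have all: "y$l = m" if "(k0, l) \<in> (edge_rel B)\<^sup>*" for l
    using that
  proof (induction rule: rtrancl_induct)
    case base then show ?case using k0 .
  next
    case (step a b)
    have pos: "B$a$b > 0" using step.hyps(2) by (simp add: edge_rel_def)
    have "(\<Sum>l\<in>UNIV. B$a$l * (m - y$l)) = (\<Sum>l\<in>UNIV. B$a$l) * m - (\<Sum>l\<in>UNIV. B$a$l * y$l)"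
      by (simp add: algebra_simps sum_subtractf sum_distrib_left)
    also have "\<dots> = 0" using h[of a] step.IH by simp
    finally have "(\<Sum>l\<in>UNIV. B$a$l * (m - y$l)) = 0" .
    moreover have "\<forall>l\<in>UNIV. B$a$l * (m - y$l) \<ge> 0" using nonneg le by simp
    ultimately have "\<forall>l\<in>UNIV. B$a$l * (m - y$l) = 0"
      using sum_nonneg_eq_0_iff[of UNIV "\<lambda>l. B$a$l * (m - y$l)"] by simp
    hence "B$a$b * (m - y$b) = 0" by blast
    thus ?case using pos by simp
  qed
  show ?thesis using all conn by (simp add: graph_connected_def)
qed



lemma graph_kemeny:
  fixes B :: "real^'n::finite^'n" and d :: "real^'n"
  assumes sym: "transpose B = B" and nonneg: "\<And>k l. B$k$l \<ge> 0" and dB: "B *v ones = d"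
    and dpos: "\<And>k. d$k > 0" and conn: "graph_connected B"
  shows "invertible (mat 1 - diag_mat (\<chi> k. inverse (sqrt (d $ k))) ** B ** diag_mat (\<chi> k. inverse (sqrt (d $ k)))
                 + (1 / (\<Sum>k\<in>UNIV. d $ k)) *\<^sub>R (diag_mat (\<chi> k. sqrt (d $ k)) ** outer ones ones ** diag_mat (\<chi> k. sqrt (d $ k))))
     \<and> kemeny (diag_mat (\<chi> k. inverse (d $ k)) ** B) = complex_of_real (trace (matrix_inv
          (mat 1 - diag_mat (\<chi> k. inverse (sqrt (d $ k))) ** B ** diag_mat (\<chi> k. inverse (sqrt (d $ k)))
                 + (1 / (\<Sum>k\<in>UNIV. d $ k)) *\<^sub>R (diag_mat (\<chi> k. sqrt (d $ k)) ** outer ones ones ** diag_mat (\<chi> k. sqrt (d $ k))))) - 1)"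
    (is "invertible ?M \<and> kemeny ?P = _")
proof -
  define Dmh where "Dmh = diag_mat (\<chi> k. inverse (sqrt (d $ k)))"
  define Dh where "Dh = diag_mat (\<chi> k. sqrt (d $ k))"
  define s where "s = (\<Sum>k\<in>UNIV. d $ k)"
  define sd where "sd k = sqrt (d$k)" for k
  have sdpos: "sd k > 0" for k using dpos by (simp add: sd_def)
  have dnz: "d$k \<noteq> 0" for k using dpos[of k] by simp
  have dabs: "\<bar>d$k\<bar> = d$k" for k using dpos[of k] by simp
  have sdnz: "sd k \<noteq> 0" for k using sdpos[of k] by simp
  have sdsq: "sd k * sd k = d$k" for k using dpos by (simp add: sd_def less_imp_le)
  have spos: "s > 0" unfolding s_def by (rule sum_pos) (simp_all add: dpos)
  have sqs: "sqrt s * sqrt s = s" using spos by simp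
  have sqspos: "sqrt s > 0" using spos by simp
  have rowsum: "(\<Sum>l\<in>UNIV. B$k$l) = d$k" for k
    using dB by (simp add: vec_eq_iff matrix_vector_mult_def ones_def)
  define S where "S = Dmh ** B ** Dmh"
  have Snth: "S$k$l = B$k$l / (sd k * sd l)" for k l
    by (simp add: S_def Dmh_def diag_left diag_right sd_def field_simps)
  have Bsym: "B$k$l = B$l$k" for k l using sym by (metis transpose_def vec_lambda_beta)
  have Ssym: "transpose S = S"
    by (simp add: vec_eq_iff transpose_def Snth Bsym mult.commute)
  define u where "u = (\<chi> k. sd k / sqrt s)"
  have outer_eq: "(1 / s) *\<^sub>R (Dh ** outer ones ones ** Dh) = outer u u"
    using sqs sqspos
    by (simp add: vec_eq_iff Dh_def diag_left diag_right outer_nth u_def ones_def sd_def field_simps)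
  have uu: "u \<bullet> u = 1"
  proof -
    have "u \<bullet> u = (\<Sum>k\<in>UNIV. d$k / s)"
      unfolding inner_vec_def u_def using sqs sqspos
      by (intro sum.cong) (simp_all add: sdsq[symmetric] field_simps)
    also have "\<dots> = 1" using spos by (simp add: s_def[symmetric] sum_divide_distrib[symmetric])
    finally show ?thesis .
  qed
  have nu: "norm u = 1" using uu by (simp add: norm_eq_sqrt_inner)
  have Su: "S *v u = u"
  proof -
    have "(S *v u)$k = u$k" for k
    proof -
      have "(S *v u)$k = (\<Sum>l\<in>UNIV. B$k$l * (1 / (sd k * sqrt s)))"
        unfolding matrix_vector_mult_def vec_lambda_beta
        using sdpos sqspos by (intro sum.cong) (simp_all add: Snth u_def sdnz field_simps)
      also have "\<dots> = d$k / (sd k * sqrt s)" by (simp add: sum_divide_distrib[symmetric] rowsum)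
      also have "\<dots> = u$k" using sdpos sqspos by (simp add: u_def sdsq[symmetric] field_simps)
      finally show ?thesis .
    qed
    thus ?thesis by (simp add: vec_eq_iff)
  qed
  obtain q :: "'n \<Rightarrow> real^'n" and lam :: "'n \<Rightarrow> real" and k1 :: 'n where qo: "\<And>k l. q k \<bullet> q l = (if k = l then 1 else 0)"
      and qe: "\<And>k. S *v q k = lam k *\<^sub>R q k" and qk1: "q k1 = u" and lk1: "lam k1 = 1"
    using spectral_ext[OF Ssym nu Su] by blast
  have simple: "lam k \<noteq> 1" if "k \<noteq> k1" for k
  proof
    assume l1: "lam k = 1"
    define y where "y = (\<chi> l. q k $ l / sd l)"
    have h: "(\<Sum>l\<in>UNIV. B$k'$l * y$l) = (\<Sum>l\<in>UNIV. B$k'$l) * y$k'" for k'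
    proof -
      have "(S *v q k)$k' = q k $ k'" using qe[of k] l1 by simp
      hence "(\<Sum>l\<in>UNIV. B$k'$l / (sd k' * sd l) * q k $ l) = q k $ k'"
        by (simp add: matrix_vector_mult_def Snth)
      moreover have "(\<Sum>l\<in>UNIV. B$k'$l / (sd k' * sd l) * q k $ l) = (\<Sum>l\<in>UNIV. B$k'$l * y$l) / sd k'"
        unfolding sum_divide_distrib y_def vec_lambda_beta
        using sdpos by (intro sum.cong) (simp_all add: field_simps)
      ultimately have "(\<Sum>l\<in>UNIV. B$k'$l * y$l) = sd k' * q k $ k'"
        using sdpos[of k'] by (simp add: field_simps)
      also have "\<dots> = d$k' * y$k'" using sdpos[of k'] by (simp add: y_def sdsq[symmetric] field_simps)
      finally show ?thesis by (simp add: rowsum)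
    qed
    define c0 where "c0 = y$k1"
    have yc: "y$l = c0" for l unfolding c0_def by (rule harmonic_const[OF nonneg conn h])
    have ql: "q k $ l = c0 * sd l" for l using yc[of l] sdpos[of l] by (simp add: y_def field_simps)
    have "q k \<bullet> u = (\<Sum>l\<in>UNIV. (c0 / sqrt s) * d$l)"
      unfolding inner_vec_def u_def vec_lambda_beta
      by (intro sum.cong) (simp_all add: ql sdsq[symmetric])
    also have "\<dots> = (c0 / sqrt s) * s" by (simp add: s_def sum_distrib_left)
    finally have "q k \<bullet> u = (c0 / sqrt s) * s" .
    moreover have "q k \<bullet> u = 0" using qo[of k k1] that qk1 by simp
    ultimately have "c0 = 0" using spos sqspos by simp
    hence "q k = 0" by (simp add: vec_eq_iff ql)
    thus False using qo[of k k] by simp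
  qed
  define mu where "mu k = (if k = k1 then 1 else 1 - lam k)" for k
  have mu0: "mu k \<noteq> 0" for k using simple by (auto simp: mu_def)
  have Meq: "?M = mat 1 - S + outer u u"
    using outer_eq by (simp add: S_def Dmh_def Dh_def s_def)
  have Mq: "?M *v q k = mu k *\<^sub>R q k" for k
  proof (cases "k = k1")
    case True
    then show ?thesis unfolding Meq
      by (simp add: matrix_vector_mult_diff_rdistrib matrix_vector_mult_add_rdistrib outer_vec qk1 Su uu mu_def)
  next
    case False
    have "u \<bullet> q k = 0" using qo[of k1 k] False qk1 by simp
    then show ?thesis unfolding Meq using False
      by (simp add: matrix_vector_mult_diff_rdistrib matrix_vector_mult_add_rdistrib outer_vec qe mu_def algebra_simps)
  qed
  define Q where "Q = (\<chi> r c. q c $ r)"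
  define Qt where "Qt = transpose Q"
  have QtQ: "Qt ** Q = mat 1"
    by (simp add: vec_eq_iff Qt_def Q_def transpose_def matrix_matrix_mult_def mat1_nth qo[symmetric] inner_vec_def)
  hence QQt: "Q ** Qt = mat 1" using matrix_left_right_inverse by blast
  have colmul: "(A ** Q) $ r $ c = (A *v q c) $ r" for A :: "real^'n^'n" and r c
    by (simp add: Q_def matrix_matrix_mult_def matrix_vector_mult_def)
  have MQ: "?M ** Q = Q ** diag_mat (\<chi> k. mu k)"
    by (simp add: vec_eq_iff colmul Mq diag_right) (simp add: Q_def)
  have SQ: "S ** Q = Q ** diag_mat (\<chi> k. lam k)"
    by (simp add: vec_eq_iff colmul qe diag_right) (simp add: Q_def)
  define Minv where "Minv = Q ** diag_mat (\<chi> k. 1 / mu k) ** Qt"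
  have dd: "diag_mat (\<chi> k. mu k) ** diag_mat (\<chi> k. 1 / mu k) = mat 1"
    using mu0 by (simp add: vec_eq_iff diag_left mat1_nth) (simp add: diag_mat_def)
  have "?M ** Minv = (?M ** Q) ** diag_mat (\<chi> k. 1 / mu k) ** Qt"
    by (simp add: Minv_def matrix_mul_assoc)
  also have "\<dots> = Q ** (diag_mat (\<chi> k. mu k) ** diag_mat (\<chi> k. 1 / mu k)) ** Qt"
    by (simp add: MQ matrix_mul_assoc)
  also have "\<dots> = mat 1" by (simp add: dd QQt)
  finally have MMinv: "?M ** Minv = mat 1" .
  have invM: "invertible ?M" using MMinv invertible_right_inverse by blast
  have inv_eq: "matrix_inv ?M = Minv" by (rule matrix_inv_unique[OF MMinv])
  have "trace Minv = trace (diag_mat (\<chi> k. 1 / mu k) ** Qt ** Q)"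
    unfolding Minv_def using trace_mul_sym by (metis matrix_mul_assoc)
  also have "\<dots> = (\<Sum>k\<in>UNIV. 1 / mu k)"
    by (simp add: QtQ flip: matrix_mul_assoc) (simp add: trace_def diag_mat_def)
  also have "\<dots> = 1 + (\<Sum>k\<in>UNIV - {k1}. 1 / (1 - lam k))"
    by (subst sum.remove[of UNIV k1]) (simp_all add: mu_def)
  finally have trM: "trace Minv = 1 + (\<Sum>k\<in>UNIV - {k1}. 1 / (1 - lam k))" .
  have Sdec: "S = Q ** diag_mat (\<chi> k. lam k) ** Qt"
    by (metis SQ QQt matrix_mul_assoc matrix_mul_rid)
  have Peq: "?P = (Dmh ** Q) ** diag_mat (\<chi> k. lam k) ** (Qt ** Dh)"
  proof -
    have "(Dmh ** Q) ** diag_mat (\<chi> k. lam k) ** (Qt ** Dh) = Dmh ** S ** Dh"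
      by (simp add: Sdec matrix_mul_assoc)
    also have "\<dots> = ?P"
      using sdpos by (simp add: vec_eq_iff S_def Dmh_def Dh_def diag_left diag_right sd_def dnz dabs field_simps)
    finally show ?thesis by simp
  qed
  have UV: "(Dmh ** Q) ** (Qt ** Dh) = mat 1"
  proof -
    have "(Dmh ** Q) ** (Qt ** Dh) = Dmh ** (Q ** Qt) ** Dh" by (simp add: matrix_mul_assoc)
    also have "\<dots> = mat 1" using sdpos
      by (simp add: QQt vec_eq_iff Dmh_def Dh_def diag_right mat1_nth sd_def) (simp add: diag_mat_def dnz)
    finally show ?thesis .
  qed
  have "kemeny ?P = complex_of_real (\<Sum>k\<in>UNIV - {k1}. 1 / (1 - (\<chi> k. lam k)$k))"
    unfolding Peq by (rule kemeny_diag[OF UV]) (simp add: lk1)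
  thus ?thesis using invM inv_eq trM by simp
qed



lemma scaleR_mv: "(c *\<^sub>R (M::real^'n::finite^'m)) *v w = c *\<^sub>R (M *v w)"
  by (simp add: vec_eq_iff matrix_vector_mult_def sum_distrib_left algebra_simps)

lemma inv_props:
  fixes A :: "real^'n::finite^'n"
  assumes "invertible A"
  shows "A ** matrix_inv A = mat 1 \<and> matrix_inv A ** A = mat 1"
proof -
  obtain B where B: "A ** B = mat 1" "B ** A = mat 1" using assms invertible_def by blast
  thus ?thesis using matrix_inv_unique[OF B(1)] by simp
qed

lemma quad_form:
  fixes D Z :: "real^'n::finite^'n"
  assumes "transpose D = D"
  shows "v \<bullet> ((D ** Z ** D) *v v) = (D *v v) \<bullet> (Z *v (D *v v))"
  by (simp add: matrix_vector_mul_assoc[symmetric] sym_dot[OF assms])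

lemma trace_outer: "trace (outer x y ** (Z::real^'n::finite^'n)) = y \<bullet> (Z *v x)"
proof -
  have "trace (outer x y ** Z) = (\<Sum>k\<in>UNIV. \<Sum>m\<in>UNIV. x$k * y$m * Z$m$k)"
    by (simp add: trace_def matrix_matrix_mult_def outer_def)
  also have "\<dots> = (\<Sum>m\<in>UNIV. \<Sum>k\<in>UNIV. x$k * y$m * Z$m$k)" by (rule sum.swap)
  also have "\<dots> = y \<bullet> (Z *v x)"
    by (simp add: inner_vec_def matrix_vector_mult_def sum_distrib_left algebra_simps)
  finally show ?thesis .
qed

lemma sherman_morrison:
  fixes M :: "real^'n::finite^'n"
  assumes invM: "invertible M" and nz: "1 - a * (x \<bullet> (matrix_inv M *v x)) \<noteq> 0"
  shows "(M - a *\<^sub>R outer x x) ** (matrix_inv M + (a / (1 - a * (x \<bullet> (matrix_inv M *v x)))) *\<^sub>R (matrix_inv M ** outer x x ** matrix_inv M)) = mat 1"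
proof -
  define N where "N = matrix_inv M"
  define \<beta> where "\<beta> = x \<bullet> (N *v x)"
  define c where "c = a / (1 - a * \<beta>)"
  have MN: "M ** N = mat 1" using inv_props[OF invM] by (simp add: N_def)
  have nz': "1 - a * \<beta> \<noteq> 0" using nz by (simp add: \<beta>_def N_def)
  have cc: "c - a - a * c * \<beta> = 0" using nz' by (simp add: c_def field_simps)
  have "(M - a *\<^sub>R outer x x) ** (N + c *\<^sub>R (N ** outer x x ** N)) *v w = w" for w
  proof -
    define \<gamma> where "\<gamma> = x \<bullet> (N *v w)"
    have z: "(N + c *\<^sub>R (N ** outer x x ** N)) *v w = N *v w + (c * \<gamma>) *\<^sub>R (N *v x)"
      by (simp add: matrix_vector_mult_add_rdistrib scaleR_mv matrix_vector_mul_assoc[symmetric]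
          outer_vec \<gamma>_def matrix_vector_mult_scaleR)
    have Mz: "M *v (N *v w + (c * \<gamma>) *\<^sub>R (N *v x)) = w + (c * \<gamma>) *\<^sub>R x"
      by (simp add: matrix_vector_right_distrib matrix_vector_mult_scaleR matrix_vector_mul_assoc MN)
    have xz: "x \<bullet> (N *v w + (c * \<gamma>) *\<^sub>R (N *v x)) = \<gamma> + c * \<gamma> * \<beta>"
      by (simp add: inner_add_right \<gamma>_def \<beta>_def)
    have "(M - a *\<^sub>R outer x x) ** (N + c *\<^sub>R (N ** outer x x ** N)) *v w
        = (M - a *\<^sub>R outer x x) *v (N *v w + (c * \<gamma>) *\<^sub>R (N *v x))"
      by (simp add: matrix_vector_mul_assoc[symmetric] z)
    also have "\<dots> = w + (c * \<gamma>) *\<^sub>R x - (a * (\<gamma> + c * \<gamma> * \<beta>)) *\<^sub>R x"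
      by (simp add: matrix_vector_mult_diff_rdistrib scaleR_mv outer_vec Mz xz)
    also have "\<dots> = w + (\<gamma> * (c - a - a * c * \<beta>)) *\<^sub>R x"
      by (simp add: algebra_simps)
    also have "\<dots> = w" using cc by simp
    finally show ?thesis .
  qed
  hence "(M - a *\<^sub>R outer x x) ** (N + c *\<^sub>R (N ** outer x x ** N)) = mat 1"
    by (simp add: matrix_eq)
  thus ?thesis by (simp add: N_def c_def \<beta>_def)
qed



theorem theorem9:
  fixes A :: "real^'n::finite^'n" and i j :: 'n
  assumes sym: "transpose A = A"
    and nonneg: "\<And>k l. A $ k $ l \<ge> 0"
    and dpos: "\<And>k. degvec A $ k > 0"
    and conn: "graph_connected A"
    and ij: "i \<noteq> j" and aij: "A $ i $ j > 0"
    and notcut: "\<not> cut_edge A i j"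
    and d_def: "d = degvec A"
    and a_def: "a = A $ i $ j"
    and v_def: "v = unit_vec i - unit_vec j"
    and Dinv_def: "Dinv = diag_mat (\<chi> k. inverse (d $ k))"
    and Dmh_def: "Dmh = diag_mat (\<chi> k. inverse (sqrt (d $ k)))"
    and Dh_def: "Dh = diag_mat (\<chi> k. sqrt (d $ k))"
    and P_def: "P = Dinv ** A"
    and Ahat_def: "Ahat = A + a *\<^sub>R outer v v"
    and Phat_def: "Phat = Dinv ** Ahat"
    and Winv_def: "Winv = mat 1 - Dmh ** A ** Dmh
                 + (1 / (\<Sum>k\<in>UNIV. d $ k)) *\<^sub>R (Dh ** outer ones ones ** Dh)"
    and Whatinv_def: "Whatinv = Winv - a *\<^sub>R (Dmh ** outer v v ** Dmh)"
    and W_def: "W = matrix_inv Winv"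
    and What_def: "What = matrix_inv Whatinv"
    and tau_def: "\<tau> = - 1 / (1 - a * (v \<bullet> ((Dmh ** W ** Dmh) *v v)))"
  shows "invertible Winv \<and> invertible Whatinv
    \<and> kemeny Phat - kemeny P = complex_of_real (a * (v \<bullet> ((Dmh ** W ** What ** Dmh) *v v)))
    \<and> 1 - a * (v \<bullet> ((Dmh ** W ** Dmh) *v v)) \<noteq> 0
    \<and> What = W - (\<tau> * a) *\<^sub>R (W ** Dmh ** outer v v ** Dmh ** W)"
proof -
  have dA: "A *v ones = d" by (simp add: d_def degvec_def)
  have dp: "\<And>k. d$k > 0" using dpos by (simp add: d_def)
  have vnth: "v$k = (if k = i then 1 else 0) - (if k = j then 1 else 0)" for k
    by (simp add: v_def unit_vec_def)
  have Asym: "A$k$l = A$l$k" for k l using sym by (metis transpose_def vec_lambda_beta)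
  have apos: "a > 0" using aij a_def by simp
  have Ahnth: "Ahat$k$l = A$k$l + a * (v$k * v$l)" for k l
    by (simp add: Ahat_def outer_nth)
  have Ahsym: "transpose Ahat = Ahat"
    by (simp add: vec_eq_iff transpose_def Ahnth Asym mult.commute)
  have Ahnonneg: "Ahat$k$l \<ge> 0" for k l
  proof (cases "(k = i \<and> l = j) \<or> (k = j \<and> l = i)")
    case True
    then show ?thesis using ij Asym[of i j] by (auto simp: Ahnth vnth a_def)
  next
    case False
    hence "v$k * v$l \<ge> 0" using ij by (auto simp: vnth)
    thus ?thesis using nonneg[of k l] apos by (simp add: Ahnth)
  qed
  have vsum: "(\<Sum>l\<in>UNIV. v$l) = 0" by (simp add: vnth sum_subtractf)
  have dAh: "Ahat *v ones = d"
  proof -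
    have "(Ahat *v ones)$k = d$k" for k
    proof -
      have "(Ahat *v ones)$k = (\<Sum>l\<in>UNIV. A$k$l) + a * v$k * (\<Sum>l\<in>UNIV. v$l)"
        by (simp add: matrix_vector_mult_def ones_def Ahnth sum.distrib sum_distrib_left algebra_simps)
      also have "\<dots> = d$k" using dA by (simp add: vsum vec_eq_iff matrix_vector_mult_def ones_def)
      finally show ?thesis .
    qed
    thus ?thesis by (simp add: vec_eq_iff)
  qed
  have Ahconn: "graph_connected Ahat"
  proof -
    have "edge_rel (delete_edge A i j) \<subseteq> edge_rel Ahat"
    proof
      fix p assume "p \<in> edge_rel (delete_edge A i j)"
      then obtain k l where p: "p = (k, l)" and nc: "\<not> ((k = i \<and> l = j) \<or> (k = j \<and> l = i))"
          and pos: "A$k$l > 0"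
        by (auto simp: edge_rel_def delete_edge_def split: if_splits)
      have "v$k * v$l \<ge> 0" using nc ij by (auto simp: vnth)
      hence "Ahat$k$l > 0" using pos apos by (simp add: Ahnth add_pos_nonneg)
      thus "p \<in> edge_rel Ahat" by (simp add: p edge_rel_def)
    qed
    hence "(edge_rel (delete_edge A i j))\<^sup>* \<subseteq> (edge_rel Ahat)\<^sup>*" by (rule rtrancl_mono)
    thus ?thesis using notcut by (auto simp: cut_edge_def graph_connected_def)
  qed
  have GA: "invertible Winv \<and> kemeny P = complex_of_real (trace W - 1)"
    using graph_kemeny[OF sym nonneg dA dp conn]
    by (simp add: Winv_def W_def P_def Dinv_def Dmh_def Dh_def)
  have Whatinv_eq: "Whatinv = mat 1 - Dmh ** Ahat ** Dmh
                 + (1 / (\<Sum>k\<in>UNIV. d $ k)) *\<^sub>R (Dh ** outer ones ones ** Dh)"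
    by (simp add: vec_eq_iff Whatinv_def Winv_def diag_left diag_right Dmh_def Ahnth outer_nth algebra_simps)
  have GAh: "invertible Whatinv \<and> kemeny Phat = complex_of_real (trace What - 1)"
    using graph_kemeny[OF Ahsym Ahnonneg dAh dp Ahconn]
    by (simp add: Whatinv_eq What_def Phat_def Dinv_def Dmh_def Dh_def)
  define x where "x = Dmh *v v"
  have Dmh_sym: "transpose Dmh = Dmh" by (simp add: Dmh_def diag_transpose)
  have Xeq: "Dmh ** outer v v ** Dmh = outer x x"
    by (simp add: vec_eq_iff x_def Dmh_def diag_left diag_right diag_vec outer_nth)
  have xi: "x$i \<noteq> 0" using dp[of i] ij by (simp add: x_def Dmh_def diag_vec vnth)
  hence xnz: "x \<noteq> 0" by auto
  define \<beta> where "\<beta> = x \<bullet> (W *v x)"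
  have quad: "v \<bullet> ((Dmh ** Z ** Dmh) *v v) = x \<bullet> (Z *v x)" for Z
    unfolding x_def by (rule quad_form[OF Dmh_sym])
  have beq: "v \<bullet> ((Dmh ** W ** Dmh) *v v) = \<beta>" by (simp add: quad \<beta>_def)
  have invW: "invertible Winv" using GA by simp
  have invWh: "invertible Whatinv" using GAh by simp
  have WW: "Winv ** W = mat 1 \<and> W ** Winv = mat 1" using inv_props[OF invW] by (simp add: W_def)
  have WhW: "Whatinv ** What = mat 1 \<and> What ** Whatinv = mat 1" using inv_props[OF invWh] by (simp add: What_def)
  have Whatinv_x: "Whatinv = Winv - a *\<^sub>R outer x x" by (simp add: Whatinv_def Xeq)
  have nz: "1 - a * \<beta> \<noteq> 0"
  proof
    assume h: "1 - a * \<beta> = 0"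
    have wx: "Winv *v (W *v x) = x" using WW by (simp add: matrix_vector_mul_assoc)
    have "Whatinv *v (W *v x) = x - (a * \<beta>) *\<^sub>R x"
      by (simp add: Whatinv_x matrix_vector_mult_diff_rdistrib scaleR_mv outer_vec wx \<beta>_def)
    also have "\<dots> = 0" using h by simp
    finally have "Whatinv *v (W *v x) = 0" .
    hence "W *v x = 0" using WhW by (metis matrix_vector_mul_assoc matrix_vector_mul_lid matrix_vector_mult_0_right)
    hence "x = 0" using WW by (metis matrix_vector_mul_assoc matrix_vector_mul_lid matrix_vector_mult_0_right)
    thus False using xnz by simp
  qed
  define c where "c = a / (1 - a * \<beta>)"
  have SM: "What = W + c *\<^sub>R (W ** outer x x ** W)"
  proof -
    have "Whatinv ** (W + c *\<^sub>R (W ** outer x x ** W)) = mat 1"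
      using sherman_morrison[OF invW, of a x] nz
      by (simp add: Whatinv_x W_def[symmetric] \<beta>_def c_def)
    thus ?thesis unfolding What_def by (rule matrix_inv_unique)
  qed
  have tau_a: "\<tau> * a = - c" using nz by (simp add: tau_def beq c_def)
  have last: "What = W - (\<tau> * a) *\<^sub>R (W ** Dmh ** outer v v ** Dmh ** W)"
  proof -
    have "W ** Dmh ** outer v v ** Dmh ** W = W ** outer x x ** W"
      by (simp add: Xeq[symmetric] matrix_mul_assoc)
    thus ?thesis by (simp add: SM tau_a)
  qed
  have trd: "trace What - trace W = c * (x \<bullet> ((W ** W) *v x))"
  proof -
    have "trace (W ** outer x x ** W) = trace (outer x x ** (W ** W))"
      by (metis trace_mul_sym matrix_mul_assoc)
    also have "\<dots> = x \<bullet> ((W ** W) *v x)" by (rule trace_outer)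
    finally show ?thesis by (simp add: SM trace_add trace_scaleR)
  qed
  have rhs: "a * (v \<bullet> ((Dmh ** W ** What ** Dmh) *v v)) = c * (x \<bullet> ((W ** W) *v x))"
  proof -
    have "Dmh ** W ** What ** Dmh = Dmh ** (W ** What) ** Dmh" by (simp add: matrix_mul_assoc)
    hence "v \<bullet> ((Dmh ** W ** What ** Dmh) *v v) = x \<bullet> ((W ** What) *v x)" by (simp add: quad)
    also have "(W ** What) *v x = (1 + c * \<beta>) *\<^sub>R ((W ** W) *v x)"
      by (simp add: SM matrix_add_ldistrib matrix_vector_mult_add_rdistrib matrix_scalar_ac scaleR_mv
          matrix_vector_mul_assoc[symmetric] outer_vec \<beta>_def algebra_simps)
    finally have "v \<bullet> ((Dmh ** W ** What ** Dmh) *v v) = (1 + c * \<beta>) * (x \<bullet> ((W ** W) *v x))" by simp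
    moreover have "a * (1 + c * \<beta>) = c" using nz by (simp add: c_def field_simps)
    ultimately show ?thesis by (metis mult.assoc)
  qed
  have "kemeny Phat - kemeny P = complex_of_real (a * (v \<bullet> ((Dmh ** W ** What ** Dmh) *v v)))"
    using GA GAh trd rhs by (simp flip: of_real_diff)
  thus ?thesis using invW invWh nz beq last by simp
qed


end
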